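(* Let $\ell_0\ge 2$ be an integer and let $\varphi_{\ell,k},\psi_{\ell,k}$ be the periodized, level-$\ell$ scaling functions and wavelets of the biorthogonal B-spline wavelet construction of order $(2,2)$ described in the context, and $\xi_q(x)=e^{2\pi i q x}$. Then for every integer $\ell\ge \ell_0$, every $k\in\{0,1,\dots,2^\ell-1\}$, every $q\in\mathbb{Z}\setminus\{0\}$, every $(\alpha_1,\alpha_2)\in\{0,1\}^2$ and every $\gamma\in[0,2]$, $$|(D^{\alpha_1}\varphi_{\ell,k},D^{\alpha_2}\xi_q)|\le 2^{\alpha_1+\alpha_2}\,2^{(\frac32-\gamma)\ell}\,|\pi q|^{\gamma-2+\alpha_1+\alpha_2},$$ $$|(D^{\alpha_1}\psi_{\ell,k},D^{\alpha_2}\xi_q)|\le 2^{\alpha_1+\alpha_2+1-\gamma}\,\|\mathbf b\|_2\,\|\mathbf b\|_0^{1/2}\,2^{(\frac32-\gamma)\ell}\,|\pi q|^{\gamma-2+\alpha_1+\alpha_2}.$$ Moreover, for $q=0$: $|(\varphi_{\ell,k}',\xi_0')|=|(\psi_{\ell,k}',\xi_0')|=0$, $|(\varphi_{\ell,k}',\xi_0)|=|(\psi_{\ell,k}',\xi_0)|=0$, $|(\varphi_{\ell,k},\xi_0)|=2^{-\ell/2}$ and $|(\psi_{\ell,k},\xi_0)|=0$.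
   Context: Functions are complex-valued on $\mathcal{D}=(0,1)$, $(u,v)=\int_0^1 u(x)\overline{v(x)}\,dx$, $D^0u=u$, $D^1u=u'$ (distributional derivative). Let $\varphi(x)=\max\{0,1-|x|\}$ be the hat function (the primal scaling function of the biorthogonal B-spline wavelets of order $(d,\tilde d)=(2,2)$, with primal filter $\mathbf a_{[-1:1]}=[\tfrac12,1,\tfrac12]$, dual filter $\tilde{\mathbf a}_{[-2:2]}=[-\tfrac14,\tfrac12,\tfrac32,\tfrac12,-\tfrac14]$), and let the mother wavelet be $\psi(x)=\sum_{j=-1}^{3} b_j\varphi(2x-j)$ with primal wavelet filter $\mathbf b=(b_{-1},b_0,b_1,b_2,b_3)=(\tfrac14,\tfrac12,-\tfrac32,\tfrac12,\tfrac14)$; $\|\mathbf b\|_2$ is its Euclidean norm and $\|\mathbf b\|_0$ its number of nonzero entries. For $\ell\in\mathbb{N}_0$, $k\in\mathbb{Z}$ set $\varphi_{\ell,k}(x)=2^{\ell/2}\varphi(2^\ell x-k)$ and $\psi_{\ell,k}(x)=2^{\ell/2}\psi(2^\ell x-k)$; in the statement these are replaced by their 1-periodizations $f^{\rm per}(x)=\sum_{j\in\mathbb{Z}}f(x+j)$ restricted to $(0,1)$, indexed by $k\in\{0,\dots,2^\ell-1\}$. *)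

theory Defs
  imports "HOL-Analysis.Analysis"
begin

definition hat :: "real \<Rightarrow> real" where
  "hat x = max 0 (1 - \<bar>x\<bar>)"

definition bfilt :: "int \<Rightarrow> real" where
  "bfilt j = (if j = -1 then 1/4 else if j = 0 then 1/2 else if j = 1 then -3/2
              else if j = 2 then 1/2 else if j = 3 then 1/4 else 0)"

definition bnorm2 :: real where
  "bnorm2 = sqrt (\<Sum>j\<in>{-1..3}. (bfilt j)\<^sup>2)"

definition bnorm0 :: nat where
  "bnorm0 = card {j\<in>{-1..3::int}. bfilt j \<noteq> 0}"

definition psi :: "real \<Rightarrow> real" where
  "psi x = (\<Sum>j\<in>{-1..3::int}. bfilt j * hat (2 * x - of_int j))"

definition phi_lk :: "nat \<Rightarrow> int \<Rightarrow> real \<Rightarrow> real" where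
  "phi_lk l k x = 2 powr (real l / 2) * hat (2 ^ l * x - of_int k)"

definition psi_lk :: "nat \<Rightarrow> int \<Rightarrow> real \<Rightarrow> real" where
  "psi_lk l k x = 2 powr (real l / 2) * psi (2 ^ l * x - of_int k)"

definition per :: "(real \<Rightarrow> real) \<Rightarrow> real \<Rightarrow> complex" where
  "per f x = complex_of_real (infsum (\<lambda>j::int. f (x + of_int j)) UNIV)"

definition xi :: "int \<Rightarrow> real \<Rightarrow> complex" where
  "xi q x = exp (2 * complex_of_real pi * \<i> * of_int q * of_real x)"

text \<open>D^0 u = u, D^1 u = derivative (a.e. derivative; the functions involved are
  Lipschitz, so this coincides with the distributional derivative as an L^1 function).\<close>
definition Dop :: "nat \<Rightarrow> (real \<Rightarrow> complex) \<Rightarrow> real \<Rightarrow> complex" where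
  "Dop a u = (if a = 0 then u else (\<lambda>x. vector_derivative u (at x)))"

definition ip :: "(real \<Rightarrow> complex) \<Rightarrow> (real \<Rightarrow> complex) \<Rightarrow> complex" where
  "ip u v = (LINT x:{0<..<1}|lborel. u x * cnj (v x))"

end

theory Submission
  imports Defs
begin

definition EE :: "int \<Rightarrow> real \<Rightarrow> complex" where
  "EE q x = exp (- (2 * complex_of_real pi * \<i> * of_int q * of_real x))"

lemma cnj_xi: "cnj (xi q x) = EE q x"
  unfolding xi_def EE_def by (subst exp_cnj) simp

lemma EE_per: "EE q (x + of_int j) = EE q x"
proof -
  have "EE q (x + of_int j) = EE q x * exp (- (2 * of_int (q*j) * complex_of_real pi * \<i>))"
    unfolding EE_def by (simp add: exp_add[symmetric] algebra_simps)
  also have "exp (- (2 * of_int (q*j) * complex_of_real pi * \<i>)) = 1"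
    using exp_integer_2pi[of "- of_int (q*j)"] by simp
  finally show ?thesis by simp
qed

lemma per_eq_sum:
  assumes supp: "\<And>y. real N < \<bar>y\<bar> \<Longrightarrow> f y = 0" and x: "-1 < x" "x < 2"
  shows "per f x = of_real (\<Sum>j\<in>{-int N - 2..int N + 2}. f (x + of_int j))"
proof -
  have "infsum (\<lambda>j::int. f (x + of_int j)) UNIV = infsum (\<lambda>j::int. f (x + of_int j)) {-int N - 2..int N + 2}"
  proof (rule infsum_cong_neutral)
    fix j assume "j \<in> UNIV - {-int N - 2..int N + 2}"
    then have "j < -int N - 2 \<or> j > int N + 2" by auto
    then have "real N < \<bar>x + of_int j\<bar>"
    proof
      assume "j < -int N - 2" then have "real_of_int j \<le> - real N - 3" by linarith
      then show ?thesis using x by linarith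
    next
      assume "j > int N + 2" then have "real_of_int j \<ge> real N + 3" by linarith
      then show ?thesis using x by linarith
    qed
    then show "f (x + of_int j) = 0" by (rule supp)
  qed auto
  then show ?thesis unfolding per_def by simp
qed

lemma EE_deriv: "(EE q has_vector_derivative (- (2 * complex_of_real pi * \<i> * of_int q)) * EE q x) (at x within s)"
proof -
  have "((\<lambda>z. exp (- (2 * complex_of_real pi * \<i> * of_int q) * z)) has_field_derivative
          (- (2 * complex_of_real pi * \<i> * of_int q)) * exp (- (2 * complex_of_real pi * \<i> * of_int q) * of_real x)) (at (of_real x))"
    by (auto intro!: derivative_eq_intros)
  from has_vector_derivative_real_field[OF this, of s] show ?thesis
    unfolding EE_def by (simp add: algebra_simps)
qed

lemma cont_EE: "continuous_on S (EE q)"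
  unfolding EE_def by (intro continuous_intros)

lemma sum_unit_integrals:
  fixes h :: "real \<Rightarrow> complex"
  assumes "continuous_on UNIV h"
  shows "(\<Sum>j\<in>{a..<a + int n}. integral {of_int j..of_int j + 1} h) = integral {of_int a..of_int a + real n} h"
proof (induction n)
  case 0 then show ?case by simp
next
  case (Suc n)
  have "{a..<a + int (Suc n)} = insert (a + int n) {a..<a + int n}" by auto
  then have "(\<Sum>j\<in>{a..<a + int (Suc n)}. integral {of_int j..of_int j + 1} h)
     = integral {of_int a + real n..of_int a + real n + 1} h + integral {of_int a..of_int a + real n} h"
    using Suc by simp
  also have "\<dots> = integral {of_int a..of_int a + real (Suc n)} h"
    using Henstock_Kurzweil_Integration.integral_combine[where a="of_int a" and c="of_int a + real n" and b="of_int a + real (Suc n)" and f=h]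
      integrable_continuous_real[where a="of_int a" and b="of_int a + real (Suc n)" and f=h]
      continuous_on_subset[OF assms]
    by (simp add: add_ac)
  finally show ?case .
qed

locale perf =
  fixes f :: "real \<Rightarrow> real" and N :: nat and T :: "real set"
  assumes cont: "continuous_on UNIV f"
    and supp: "\<And>y. real N < \<bar>y\<bar> \<Longrightarrow> f y = 0"
    and finT: "finite T"
    and der: "\<And>y. y \<notin> T \<Longrightarrow> f differentiable (at y)"
begin

definition J :: "int set" where "J = {-int N - 2..int N + 2}"
definition g :: "real \<Rightarrow> real" where "g x = (\<Sum>j\<in>J. f (x + of_int j))"

lemma per_g: "-1 < x \<Longrightarrow> x < 2 \<Longrightarrow> per f x = of_real (g x)"
  unfolding g_def J_def by (rule per_eq_sum[OF supp])

lemma cont_shift: "continuous_on S (\<lambda>x. f (x + c))"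
  by (rule continuous_on_compose2[OF cont]) (auto intro: continuous_intros)

lemma cont_g: "continuous_on S g"
  unfolding g_def by (intro continuous_on_sum cont_shift)

lemma cont_perE: "continuous_on {0..1} (\<lambda>x. per f x * EE q x)"
proof -
  have "continuous_on {0..1} (\<lambda>x. of_real (g x) * EE q x)"
    by (intro continuous_intros cont_g cont_EE)
  then show ?thesis
    by (rule continuous_on_eq) (auto simp: per_g)
qed

lemma ip_per: "ip (per f) (xi q) = integral {0..1} (\<lambda>x. per f x * EE q x)"
proof -
  have "set_integrable lborel {0..1} (\<lambda>x. per f x * EE q x)"
    unfolding set_integrable_def by (rule borel_integrable_compact[OF _ cont_perE]) auto
  then have "set_integrable lborel {0<..<1} (\<lambda>x. per f x * EE q x)"
    by (rule set_integrable_subset) auto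
  then show ?thesis
    unfolding ip_def cnj_xi
    by (simp add: set_borel_integral_eq_integral integral_open_interval_real)
qed

lemma per_to_R: "integral {0..1} (\<lambda>x. per f x * EE q x)
   = integral {- real N - 2..real N + 3} (\<lambda>x. of_real (f x) * EE q x)"
proof -
  let ?h = "\<lambda>x. of_real (f x) * EE q x"
  have conth: "continuous_on S ?h" for S
    by (intro continuous_intros cont_EE continuous_on_compose2[OF cont]) auto
  have "integral {0..1} (\<lambda>x. per f x * EE q x) = integral {0..1} (\<lambda>x. \<Sum>j\<in>J. ?h (x + of_int j))"
    by (rule integral_cong) (simp add: per_g g_def EE_per sum_distrib_right)
  also have "\<dots> = (\<Sum>j\<in>J. integral {0..1} (\<lambda>x. ?h (x + of_int j)))"
  proof (rule integral_sum)
    show "finite J" by (simp add: J_def)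
    fix j show "(\<lambda>x. ?h (x + of_int j)) integrable_on {0..1}"
      by (intro integrable_continuous_real continuous_on_compose2[OF conth[of UNIV]]) (auto intro: continuous_intros)
  qed
  also have "\<dots> = (\<Sum>j\<in>J. integral {of_int j..of_int j + 1} ?h)"
  proof (rule sum.cong)
    fix j
    have "integral {0..1} (\<lambda>x. ?h (x + of_int j)) = integral {0..1} (?h \<circ> (+) (of_int j))"
      by (simp add: o_def add.commute)
    also have "\<dots> = integral {of_int j..of_int j + 1} ?h"
      by (simp add: integral_shift_Icc_real add.commute)
    finally show "integral {0..1} (\<lambda>x. ?h (x + of_int j)) = integral {of_int j..of_int j + 1} ?h" .
  qed simp
  also have "J = {(-int N - 2)..<(-int N - 2) + int (2*N+5)}" by (auto simp: J_def)
  also have "(\<Sum>j\<in>{(-int N - 2)..<(-int N - 2) + int (2*N+5)}. integral {of_int j..of_int j + 1} ?h)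
      = integral {of_int (-int N - 2)..of_int (-int N - 2) + real (2*N+5)} ?h"
    by (rule sum_unit_integrals[OF conth])
  also have "{of_int (-int N - 2)..of_int (-int N - 2) + real (2*N+5)} = {- real N - 2..real N + 3}"
    by auto
  finally show ?thesis .
qed

definition S :: "real set" where "S = (\<Union>j\<in>J. (\<lambda>t. t - of_int j) ` T)"

lemma finS: "finite S"
  unfolding S_def J_def using finT by auto

lemma per_deriv:
  assumes x: "x \<in> {-1<..<2} - S"
  shows "(per f has_vector_derivative Dop 1 (per f) x) (at x)"
proof -
  have "DERIV (\<lambda>x. f (x + of_int j)) x :> deriv f (x + of_int j)" if j: "j \<in> J" for j
  proof -
    have "x + of_int j \<notin> T"
    proof
      assume "x + of_int j \<in> T"
      then have "x \<in> (\<lambda>t. t - of_int j) ` T" by (intro image_eqI[of _ _ "x + of_int j"]) auto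
      then show False using x j unfolding S_def by auto
    qed
    then have "DERIV f (x + of_int j) :> deriv f (x + of_int j)"
      using der DERIV_deriv_iff_real_differentiable by blast
    then show ?thesis by (simp add: DERIV_shift)
  qed
  then have "DERIV g x :> (\<Sum>j\<in>J. deriv f (x + of_int j))"
    unfolding g_def by (intro DERIV_sum) auto
  then have "((\<lambda>x. complex_of_real (g x)) has_vector_derivative of_real (\<Sum>j\<in>J. deriv f (x + of_int j))) (at x)"
    by (rule has_vector_derivative_of_real)
  then have d: "(per f has_vector_derivative of_real (\<Sum>j\<in>J. deriv f (x + of_int j))) (at x)"
    by (rule has_vector_derivative_transform_within_open[where S="{-1<..<2}"]) (use x in \<open>auto simp: per_g\<close>)
  then have "Dop 1 (per f) x = of_real (\<Sum>j\<in>J. deriv f (x + of_int j))"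
    unfolding Dop_def by (simp add: vector_derivative_at)
  with d show ?thesis by simp
qed

lemma per_periodic: "per f 1 = per f 0"
proof -
  have "infsum (\<lambda>j::int. f (1 + of_int j)) UNIV = infsum (\<lambda>j::int. f (0 + of_int j)) UNIV"
  proof -
    have "infsum (\<lambda>j::int. f (1 + of_int j)) UNIV = infsum (\<lambda>j::int. f (of_int ((\<lambda>j. j + 1) j))) UNIV"
      by (simp add: add.commute)
    also have "\<dots> = infsum (\<lambda>j::int. f (of_int j)) UNIV"
      by (rule infsum_reindex_bij_betw) (rule bij_betwI[where g="\<lambda>j. j - 1"], auto)
    finally show ?thesis by simp
  qed
  then show ?thesis unfolding per_def by simp
qed

lemma ip_D1:
  assumes "set_integrable lborel {0<..<1} (\<lambda>x. Dop 1 (per f) x * cnj (xi q x))"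
  shows "ip (Dop 1 (per f)) (xi q) = 2 * complex_of_real pi * \<i> * of_int q * ip (per f) (xi q)"
proof -
  define c where "c = 2 * complex_of_real pi * \<i> * of_int q"
  define I where "I = integral {0..1} (\<lambda>x. per f x * EE q x)"
  have fund: "((\<lambda>x. per f x * (- c * EE q x) + Dop 1 (per f) x * EE q x) has_integral
      (per f 1 * EE q 1 - per f 0 * EE q 0)) {0..1}"
  proof (rule fundamental_theorem_of_calculus_strong[OF finS])
    fix x assume "x \<in> {0..1} - S"
    then have "x \<in> {-1<..<2} - S" by auto
    from has_vector_derivative_mult[OF per_deriv[OF this] EE_deriv[of q x UNIV]]
    show "((\<lambda>x. per f x * EE q x) has_vector_derivative
            per f x * (- c * EE q x) + Dop 1 (per f) x * EE q x) (at x)"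
      by (simp add: c_def)
  qed (auto intro: cont_perE)
  have e1: "EE q 1 = EE q 0" using EE_per[of q 0 1] by simp
  have A: "((\<lambda>x. per f x * EE q x) has_integral I) {0..1}"
    unfolding I_def by (rule integrable_integral[OF integrable_continuous_real[OF cont_perE]])
  have "((\<lambda>x. (per f x * (- c * EE q x) + Dop 1 (per f) x * EE q x) + c * (per f x * EE q x))
      has_integral (0 + c * I)) {0..1}"
    using has_integral_add[OF fund has_integral_mult_right[OF A, of c]] per_periodic e1 by simp
  then have B: "((\<lambda>x. Dop 1 (per f) x * EE q x) has_integral (c * I)) {0..1}"
    by (simp add: algebra_simps)
  have "ip (Dop 1 (per f)) (xi q) = integral {0<..<1} (\<lambda>x. Dop 1 (per f) x * EE q x)"
    using assms unfolding ip_def cnj_xi by (simp add: set_borel_integral_eq_integral)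
  also have "\<dots> = c * I"
    using B by (simp add: integral_open_interval_real[symmetric] integral_unique)
  finally show ?thesis by (simp add: c_def I_def ip_per)
qed

lemma ip_D1_cases:
  "ip (Dop 1 (per f)) (xi q) = 2 * complex_of_real pi * \<i> * of_int q * ip (per f) (xi q)
   \<or> ip (Dop 1 (per f)) (xi q) = 0"
proof (cases "set_integrable lborel {0<..<1} (\<lambda>x. Dop 1 (per f) x * cnj (xi q x))")
  case True then show ?thesis using ip_D1 by blast
next
  case False then show ?thesis
    unfolding ip_def set_lebesgue_integral_def set_integrable_def
    by (simp add: not_integrable_integral_eq)
qed

end

lemma Dop_xi: "Dop 1 (xi q) = (\<lambda>x. 2 * complex_of_real pi * \<i> * of_int q * xi q x)"
proof
  fix x
  have "((\<lambda>z. exp ((2 * complex_of_real pi * \<i> * of_int q) * z)) has_field_derivative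
          (2 * complex_of_real pi * \<i> * of_int q) * exp ((2 * complex_of_real pi * \<i> * of_int q) * of_real x)) (at (of_real x))"
    by (auto intro!: derivative_eq_intros)
  from has_vector_derivative_real_field[OF this, of UNIV]
  have "(xi q has_vector_derivative (2 * complex_of_real pi * \<i> * of_int q * xi q x)) (at x)"
    unfolding xi_def by (simp add: algebra_simps)
  then show "Dop 1 (xi q) x = 2 * complex_of_real pi * \<i> * of_int q * xi q x"
    unfolding Dop_def by (simp add: vector_derivative_at)
qed

lemma Dop_xi_Suc: "Dop (Suc 0) (xi q) = (\<lambda>x. 2 * complex_of_real pi * \<i> * of_int q * xi q x)"
  using Dop_xi[of q] by simp

lemma ip_cmul2: "ip u (\<lambda>x. c * v x) = cnj c * ip u v"
proof -
  have "ip u (\<lambda>x. c * v x) = (LINT x:{0<..<1}|lborel. cnj c * (u x * cnj (v x)))"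
    unfolding ip_def by (simp add: algebra_simps)
  then show ?thesis unfolding ip_def by simp
qed

lemma norm_c: "cmod (2 * complex_of_real pi * \<i> * of_int q) = 2 * pi * \<bar>real_of_int q\<bar>"
  by (simp add: norm_mult)

lemma (in perf) bound_D:
  assumes "a1 \<le> 1" "a2 \<le> 1"
  shows "cmod (ip (Dop a1 (per f)) (Dop a2 (xi q))) \<le> (2 * pi * \<bar>real_of_int q\<bar>) ^ (a1 + a2) * cmod (ip (per f) (xi q))"
proof -
  have s1: "cmod (ip (Dop a1 (per f)) (xi q)) \<le> (2 * pi * \<bar>real_of_int q\<bar>) ^ a1 * cmod (ip (per f) (xi q))"
  proof (cases "a1 = 0")
    case True then show ?thesis by (simp add: Dop_def)
  next
    case False then have "a1 = 1" using assms by simp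
    then show ?thesis using ip_D1_cases[of q] by (auto simp: norm_mult)
  qed
  show ?thesis
  proof (cases "a2 = 0")
    case True then show ?thesis using s1 by (simp add: Dop_def)
  next
    case False then have "a2 = 1" using assms by simp
    then have "cmod (ip (Dop a1 (per f)) (Dop a2 (xi q))) = (2 * pi * \<bar>real_of_int q\<bar>) * cmod (ip (Dop a1 (per f)) (xi q))"
      by (simp add: Dop_xi Dop_xi_Suc ip_cmul2 norm_mult)
    also have "\<dots> \<le> (2 * pi * \<bar>real_of_int q\<bar>) * ((2 * pi * \<bar>real_of_int q\<bar>) ^ a1 * cmod (ip (per f) (xi q)))"
      by (rule mult_left_mono[OF s1]) simp
    finally show ?thesis using \<open>a2 = 1\<close> by (simp add: algebra_simps)
  qed
qed

lemma (in perf) q0_facts: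
  "ip (Dop 1 (per f)) (Dop 1 (xi 0)) = 0" "ip (Dop 1 (per f)) (xi 0) = 0"
  using ip_D1_cases[of 0] by (auto simp: Dop_xi Dop_xi_Suc ip_cmul2 ip_def)


lemma hat_out: "1 \<le> \<bar>y\<bar> \<Longrightarrow> hat y = 0" unfolding hat_def by simp
lemma hat_neg: "-1 \<le> y \<Longrightarrow> y \<le> 0 \<Longrightarrow> hat y = 1 + y" unfolding hat_def by simp
lemma hat_pos: "0 \<le> y \<Longrightarrow> y \<le> 1 \<Longrightarrow> hat y = 1 - y" unfolding hat_def by simp

lemma cont_hat: "continuous_on S hat"
  unfolding hat_def[abs_def] by (intro continuous_intros)

lemma DERIV_imp_diff: "DERIV f x :> D \<Longrightarrow> f differentiable (at x)"
  by (rule differentiableI[OF has_field_derivative_imp_has_derivative])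

lemma hat_diff:
  assumes "z \<notin> {-1,0,1}"
  shows "hat differentiable (at z)"
proof -
  consider "z < -1" | "-1 < z \<and> z < 0" | "0 < z \<and> z < 1" | "1 < z" using assms by force
  then show ?thesis
  proof cases
    case 1
    have "DERIV (\<lambda>_. 0::real) z :> 0" by simp
    then have "DERIV hat z :> 0"
      by (rule has_field_derivative_transform_within_open[where S="{..< -1}"]) (use 1 in \<open>auto simp: hat_out\<close>)
    then show ?thesis by (rule DERIV_imp_diff)
  next
    case 2
    have "DERIV (\<lambda>y. 1 + y::real) z :> 1" by (auto intro!: derivative_eq_intros)
    then have "DERIV hat z :> 1"
      by (rule has_field_derivative_transform_within_open[where S="{-1<..<0}"]) (use 2 in \<open>auto simp: hat_neg\<close>)
    then show ?thesis by (rule DERIV_imp_diff)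
  next
    case 3
    have "DERIV (\<lambda>y. 1 - y::real) z :> -1" by (auto intro!: derivative_eq_intros)
    then have "DERIV hat z :> -1"
      by (rule has_field_derivative_transform_within_open[where S="{0<..<1}"]) (use 3 in \<open>auto simp: hat_pos\<close>)
    then show ?thesis by (rule DERIV_imp_diff)
  next
    case 4
    have "DERIV (\<lambda>_. 0::real) z :> 0" by simp
    then have "DERIV hat z :> 0"
      by (rule has_field_derivative_transform_within_open[where S="{1<..}"]) (use 4 in \<open>auto simp: hat_out\<close>)
    then show ?thesis by (rule DERIV_imp_diff)
  qed
qed

lemma hat_lin_diff:
  assumes "s * y - k \<notin> {-1,0,1}"
  shows "(\<lambda>x. hat (s * x - k)) differentiable (at y)"
proof -
  have "(\<lambda>x. s * x - k) differentiable (at y)" by (auto intro!: derivative_intros)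
  then show ?thesis using differentiable_compose[where f=hat and g="\<lambda>x. s * x - k" and x=y, OF hat_diff[OF assms]] by simp
qed

definition Gl :: "complex \<Rightarrow> complex \<Rightarrow> complex \<Rightarrow> real \<Rightarrow> complex" where
  "Gl \<alpha> \<beta> c x = exp (c * of_real x) * ((\<alpha> * of_real x + \<beta>) / c - \<alpha> / c^2)"

lemma linexp:
  fixes \<alpha> \<beta> c :: complex
  assumes "c \<noteq> 0" "a \<le> b"
  shows "((\<lambda>x. (\<alpha> * of_real x + \<beta>) * exp (c * of_real x)) has_integral (Gl \<alpha> \<beta> c b - Gl \<alpha> \<beta> c a)) {a..b}"
proof (rule fundamental_theorem_of_calculus[OF assms(2)])
  fix x :: real
  have "((\<lambda>z. exp (c * z) * ((\<alpha> * z + \<beta>) / c - \<alpha> / c^2)) has_field_derivative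
      ((\<alpha> * of_real x + \<beta>) * exp (c * of_real x))) (at (of_real x))"
    by (rule derivative_eq_intros refl | use assms(1) in \<open>simp add: field_simps power2_eq_square\<close>)+
  from has_vector_derivative_real_field[OF this]
  show "(Gl \<alpha> \<beta> c has_vector_derivative (\<alpha> * of_real x + \<beta>) * exp (c * of_real x)) (at x within {a..b})"
    unfolding Gl_def[abs_def] by simp
qed

lemma linpoly:
  fixes \<alpha> \<beta> :: complex
  assumes "a \<le> b"
  shows "((\<lambda>x. (\<alpha> * of_real x + \<beta>)) has_integral
     ((\<alpha> * of_real b ^ 2 / 2 + \<beta> * of_real b) - (\<alpha> * of_real a ^ 2 / 2 + \<beta> * of_real a))) {a..b}"
proof (rule fundamental_theorem_of_calculus[OF assms])
  fix x :: real
  have "((\<lambda>z. \<alpha> * z ^ 2 / 2 + \<beta> * z) has_field_derivative (\<alpha> * of_real x + \<beta>)) (at (of_real x))"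
    by (rule derivative_eq_intros refl | simp add: field_simps power2_eq_square)+
  from has_vector_derivative_real_field[OF this]
  show "((\<lambda>x. \<alpha> * of_real x ^ 2 / 2 + \<beta> * of_real x) has_vector_derivative \<alpha> * of_real x + \<beta>) (at x within {a..b})"
    by simp
qed


definition Vh :: "real \<Rightarrow> real \<Rightarrow> complex \<Rightarrow> complex" where
  "Vh s k c = (if c = 0 then of_real (1/s) else
     exp (c * of_real (k/s)) * (exp (c / of_real s) + exp (- c / of_real s) - 2) * of_real s / c^2)"

lemma hatF:
  fixes s k a b :: real and c :: complex
  assumes s: "s > 0" and a: "a \<le> (k-1)/s" and b: "(k+1)/s \<le> b"
  shows "((\<lambda>x. of_real (hat (s*x - k)) * exp (c * of_real x)) has_integral Vh s k c) {a..b}"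
proof -
  define p0 where "p0 = (k-1)/s"
  define p1 where "p1 = k/s"
  define p2 where "p2 = (k+1)/s"
  let ?F = "\<lambda>x. of_real (hat (s*x - k)) * exp (c * of_real x)"
  have le: "p0 \<le> p1" "p1 \<le> p2" using s by (auto simp: p0_def p1_def p2_def divide_right_mono)
  have sp: "s * p0 = k - 1" "s * p1 = k" "s * p2 = k + 1" using s by (auto simp: p0_def p1_def p2_def)
  have I0: "(?F has_integral 0) {a..p0}"
  proof (rule has_integral_is_0)
    fix x assume "x \<in> {a..p0}"
    then have "s * x \<le> s * p0" using s by (auto intro: mult_left_mono)
    then show "?F x = 0" using sp by (simp add: hat_out)
  qed
  have I3: "(?F has_integral 0) {p2..b}"
  proof (rule has_integral_is_0)
    fix x assume "x \<in> {p2..b}"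
    then have "s * x \<ge> s * p2" using s by (auto intro: mult_left_mono)
    then show "?F x = 0" using sp by (simp add: hat_out)
  qed
  let ?L1 = "\<lambda>x. (of_real s * of_real x + (1 - of_real k)) * exp (c * of_real x)"
  let ?L2 = "\<lambda>x. (- of_real s * of_real x + (1 + of_real k)) * exp (c * of_real x)"
  have eq1: "?F x = ?L1 x" if "x \<in> {p0..p1}" for x
  proof -
    have "s * x \<ge> s * p0" "s * x \<le> s * p1" using that s by (auto intro: mult_left_mono)
    then show ?thesis using sp by (simp add: hat_neg)
  qed
  have eq2: "?F x = ?L2 x" if "x \<in> {p1..p2}" for x
  proof -
    have "s * x \<ge> s * p1" "s * x \<le> s * p2" using that s by (auto intro: mult_left_mono)
    then show ?thesis using sp by (simp add: hat_pos)
  qed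
  show ?thesis
  proof (cases "c = 0")
    case True
    have J1: "(?F has_integral ((of_real s * of_real p1 ^ 2 / 2 + (1 - of_real k) * of_real p1)
        - (of_real s * of_real p0 ^ 2 / 2 + (1 - of_real k) * of_real p0))) {p0..p1}"
      using linpoly[OF le(1), of "of_real s" "1 - of_real k"] eq1 True
      by (subst has_integral_cong[where g="\<lambda>x. of_real s * of_real x + (1 - of_real k)"]) auto
    have J2: "(?F has_integral ((- of_real s * of_real p2 ^ 2 / 2 + (1 + of_real k) * of_real p2)
        - (- of_real s * of_real p1 ^ 2 / 2 + (1 + of_real k) * of_real p1))) {p1..p2}"
      using linpoly[OF le(2), of "- of_real s" "1 + of_real k"] eq2 True
      by (subst has_integral_cong[where g="\<lambda>x. - of_real s * of_real x + (1 + of_real k)"]) auto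
    have K: "(?F has_integral (0 + ((of_real s * of_real p1 ^ 2 / 2 + (1 - of_real k) * of_real p1)
        - (of_real s * of_real p0 ^ 2 / 2 + (1 - of_real k) * of_real p0)) +
        ((- of_real s * of_real p2 ^ 2 / 2 + (1 + of_real k) * of_real p2)
        - (- of_real s * of_real p1 ^ 2 / 2 + (1 + of_real k) * of_real p1)) + 0)) {a..b}"
      using has_integral_combine[OF _ _ has_integral_combine[OF _ _ has_integral_combine[OF _ _ I0 J1] J2] I3]
        le a b by (simp add: p0_def p1_def p2_def)
    have "(0 + ((of_real s * of_real p1 ^ 2 / 2 + (1 - of_real k) * of_real p1)
        - (of_real s * of_real p0 ^ 2 / 2 + (1 - of_real k) * of_real p0)) +
        ((- of_real s * of_real p2 ^ 2 / 2 + (1 + of_real k) * of_real p2)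
        - (- of_real s * of_real p1 ^ 2 / 2 + (1 + of_real k) * of_real p1)) + 0 :: complex) = Vh s k c"
      using s True unfolding Vh_def p0_def p1_def p2_def
      by (simp add: field_simps power2_eq_square)
    with K show ?thesis by simp
  next
    case False
    have J1: "(?F has_integral (Gl (of_real s) (1 - of_real k) c p1 - Gl (of_real s) (1 - of_real k) c p0)) {p0..p1}"
      using linexp[OF False le(1), of "of_real s" "1 - of_real k"] eq1
      by (subst has_integral_cong[where g="?L1"]) auto
    have J2: "(?F has_integral (Gl (- of_real s) (1 + of_real k) c p2 - Gl (- of_real s) (1 + of_real k) c p1)) {p1..p2}"
      using linexp[OF False le(2), of "- of_real s" "1 + of_real k"] eq2
      by (subst has_integral_cong[where g="?L2"]) auto
    have K: "(?F has_integral (0 + (Gl (of_real s) (1 - of_real k) c p1 - Gl (of_real s) (1 - of_real k) c p0)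
       + (Gl (- of_real s) (1 + of_real k) c p2 - Gl (- of_real s) (1 + of_real k) c p1) + 0)) {a..b}"
      using has_integral_combine[OF _ _ has_integral_combine[OF _ _ has_integral_combine[OF _ _ I0 J1] J2] I3]
        le a b by (simp add: p0_def p1_def p2_def)
    define E where "E = exp (c * of_real (k/s))"
    define A where "A = exp (c / of_real s)"
    define B where "B = exp (- c / of_real s)"
    have e0: "exp (c * of_real p0) = E * B"
    proof -
      have "c * of_real p0 = c * of_real (k/s) + (- c / of_real s)"
        using s by (simp add: p0_def field_simps)
      then have "exp (c * of_real p0) = exp (c * of_real (k/s) + (- c / of_real s))" by (rule arg_cong)
      then show ?thesis by (simp only: E_def B_def exp_add)
    qed
    have e2: "exp (c * of_real p2) = E * A"
    proof -
      have "c * of_real p2 = c * of_real (k/s) + (c / of_real s)"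
        using s by (simp add: p2_def field_simps)
      then have "exp (c * of_real p2) = exp (c * of_real (k/s) + (c / of_real s))" by (rule arg_cong)
      then show ?thesis by (simp only: E_def A_def exp_add)
    qed
    have e1: "exp (c * of_real p1) = E" by (simp add: E_def p1_def)
    have "0 + (Gl (of_real s) (1 - of_real k) c p1 - Gl (of_real s) (1 - of_real k) c p0)
       + (Gl (- of_real s) (1 + of_real k) c p2 - Gl (- of_real s) (1 + of_real k) c p1) + 0 = Vh s k c"
      unfolding Gl_def e0 e1 e2 Vh_def using False s
      unfolding E_def[symmetric] A_def[symmetric] B_def[symmetric]
      by (simp add: p0_def p1_def p2_def field_simps power2_eq_square)
    with K show ?thesis by simp
  qed
qed


definition cc :: "int \<Rightarrow> complex" where "cc q = - (2 * complex_of_real pi * \<i> * of_int q)"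

lemma EE_cc: "EE q x = exp (cc q * of_real x)"
  unfolding EE_def cc_def by (simp add: algebra_simps)

lemma Vmod:
  assumes s: "s > 0" and q: "q \<noteq> 0"
  shows "cmod (Vh s k (cc q)) = s * sin (pi * of_int q / s) ^ 2 / (pi * of_int q) ^ 2"
proof -
  define \<theta> where "\<theta> = - (2 * pi * of_int q / s)"
  have c0: "cc q \<noteq> 0" using q by (simp add: cc_def)
  have cs: "cc q / of_real s = \<i> * of_real \<theta>"
    using s by (simp add: cc_def \<theta>_def field_simps)
  have AB: "exp (cc q / of_real s) + exp (- cc q / of_real s) - 2 = of_real (2 * cos \<theta> - 2)"
  proof -
    have "exp (cc q / of_real s) = cis \<theta>" by (simp add: cs cis_conv_exp)
    moreover have "exp (- cc q / of_real s) = cis (- \<theta>)" by (simp add: cs cis_conv_exp)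
    ultimately show ?thesis by (simp add: complex_eq_iff)
  qed
  have n1: "cmod (exp (cc q * of_real (k/s))) = 1" by (simp add: cc_def)
  have n2: "cmod ((cc q)^2) = 4 * pi^2 * of_int q ^ 2"
    by (simp add: cc_def norm_mult norm_power power_mult_distrib)
  have cth: "cos \<theta> = 1 - 2 * sin (pi * of_int q / s) ^ 2"
  proof -
    have "cos \<theta> = cos (2 * (pi * of_int q / s))" by (simp add: \<theta>_def mult.assoc)
    also have "\<dots> = 1 - 2 * sin (pi * of_int q / s) ^ 2" by (rule cos_double_sin)
    finally show ?thesis .
  qed
  have "Vh s k (cc q) = exp (cc q * of_real (k/s)) * of_real (2 * cos \<theta> - 2) * of_real s / (cc q)^2"
    using c0 AB by (simp add: Vh_def)
  then have "cmod (Vh s k (cc q)) = cmod (exp (cc q * of_real (k/s))) * \<bar>2 * cos \<theta> - 2\<bar> * \<bar>s\<bar> / cmod ((cc q)^2)"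
    by (simp only: norm_mult norm_divide norm_of_real)
  then have "cmod (Vh s k (cc q)) = cmod (exp (cc q * of_real (k/s))) * \<bar>2 * cos \<theta> - 2\<bar> * s / cmod ((cc q)^2)"
    using s by simp
  also have "\<dots> = 4 * sin (pi * of_int q / s) ^ 2 * s / (4 * pi^2 * of_int q ^ 2)"
    unfolding n1 n2 cth by simp
  also have "\<dots> = s * sin (pi * of_int q / s) ^ 2 / (pi * of_int q) ^ 2"
    by (simp add: power_mult_distrib)
  finally show ?thesis .
qed

lemma sin_sq_le: fixes t \<gamma> :: real assumes "0 \<le> \<gamma>" "\<gamma> \<le> 2" shows "sin t ^ 2 \<le> \<bar>t\<bar> powr \<gamma>"
proof (cases "\<bar>t\<bar> \<ge> 1")
  case True
  have "sin t ^ 2 \<le> 1" using sin_cos_squared_add[of t] zero_le_power2[of "cos t"] by linarith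
  also have "1 \<le> \<bar>t\<bar> powr \<gamma>" using True assms by (simp add: ge_one_powr_ge_zero)
  finally show ?thesis .
next
  case False
  have "sin t ^ 2 \<le> \<bar>t\<bar> ^ 2"
    using abs_sin_x_le_abs_x[of t] by (metis abs_ge_zero power2_abs power_mono)
  also have "\<dots> \<le> \<bar>t\<bar> powr \<gamma>"
  proof (cases "t = 0")
    case True then show ?thesis by simp
  next
    case False
    then have "\<bar>t\<bar> ^ 2 = \<bar>t\<bar> powr 2" by (simp add: powr_realpow[symmetric])
    also have "\<dots> \<le> \<bar>t\<bar> powr \<gamma>" using \<open>\<not> 1 \<le> \<bar>t\<bar>\<close> assms by (intro powr_mono') auto
    finally show ?thesis .
  qed
  finally show ?thesis .
qed

lemma M_bound:
  assumes s: "s > 0" and q: "q \<noteq> 0" and g: "0 \<le> \<gamma>" "\<gamma> \<le> 2"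
  shows "s * sin (pi * of_int q / s) ^ 2 / (pi * of_int q) ^ 2 \<le> s powr (1 - \<gamma>) * \<bar>pi * of_int q\<bar> powr (\<gamma> - 2)"
proof -
  define P where "P = \<bar>pi * of_int q\<bar>"
  have P: "P > 0" using q by (simp add: P_def)
  have "\<bar>pi * of_int q / s\<bar> = P / s" using s by (simp add: P_def)
  then have "sin (pi * of_int q / s) ^ 2 \<le> (P / s) powr \<gamma>" using sin_sq_le[OF g, of "pi * of_int q / s"] by simp
  then have "s * sin (pi * of_int q / s) ^ 2 / (pi * of_int q) ^ 2 \<le> s * (P / s) powr \<gamma> / P ^ 2"
    using s P by (simp add: P_def divide_right_mono)
  also have "\<dots> = s powr (1 - \<gamma>) * P powr (\<gamma> - 2)"
    using s P
  proof -
    have h1: "(P / s) powr \<gamma> = P powr \<gamma> / s powr \<gamma>" using s P by (simp add: powr_divide)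
    have h2: "s powr (1 - \<gamma>) = s / s powr \<gamma>" using s by (simp add: powr_diff)
    have "P powr 2 = P^2" using powr_realpow[OF P, of 2] by simp
    then have h3: "P powr (\<gamma> - 2) = P powr \<gamma> / P^2" by (simp add: powr_diff)
    have "s powr \<gamma> > 0" "P^2 > 0" using s P by auto
    then show ?thesis unfolding h1 h2 h3 by (simp add: divide_simps)
  qed
  finally show ?thesis by (simp add: P_def)
qed


lemma hat_zero_far: "1 \<le> \<bar>y\<bar> \<Longrightarrow> hat y = 0" by (rule hat_out)

lemma two_pow_ge1: "(1::real) \<le> 2 ^ l" by simp

lemma perf_phi: "perf (phi_lk l k) (nat \<bar>k\<bar> + 1)
   {(of_int k - 1) / 2^l, of_int k / 2^l, (of_int k + 1) / 2^l}"
proof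
  show "continuous_on UNIV (phi_lk l k)"
    unfolding phi_lk_def[abs_def]
    by (intro continuous_intros continuous_on_compose2[OF cont_hat[of UNIV]]) auto
next
  fix y :: real assume y: "real (nat \<bar>k\<bar> + 1) < \<bar>y\<bar>"
  have "\<bar>y\<bar> \<le> 2^l * \<bar>y\<bar>" using two_pow_ge1[of l] by (simp add: mult_right_mono[of 1 "2^l" "\<bar>y\<bar>", simplified])
  then have "1 \<le> \<bar>2^l * y - of_int k\<bar>" using y by (simp add: abs_mult)
  then show "phi_lk l k y = 0" by (simp add: phi_lk_def hat_out)
next
  show "finite {(of_int k - 1) / 2^l, of_int k / 2^l, (of_int k + 1) / (2::real)^l}" by simp
next
  fix y :: real assume y: "y \<notin> {(of_int k - 1) / 2^l, of_int k / 2^l, (of_int k + 1) / 2^l}"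
  have "2^l * y - of_int k \<notin> {-1,0,1}"
  proof
    assume "2^l * y - of_int k \<in> {-1,0,1}"
    then have "y = (of_int k - 1) / 2^l \<or> y = of_int k / 2^l \<or> y = (of_int k + 1) / 2^l"
      by (auto simp: field_simps)
    then show False using y by blast
  qed
  then have "(\<lambda>x. hat (2^l * x - of_int k)) differentiable (at y)" by (rule hat_lin_diff)
  then show "phi_lk l k differentiable (at y)"
    unfolding phi_lk_def[abs_def] by (intro differentiable_mult differentiable_const)
qed

lemma ip_phi: "ip (per (phi_lk l k)) (xi q) = of_real (2 powr (real l / 2)) * Vh (2^l) (of_int k) (cc q)"
proof -
  interpret perf "phi_lk l k" "nat \<bar>k\<bar> + 1" "{(of_int k - 1) / 2^l, of_int k / 2^l, (of_int k + 1) / 2^l}"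
    by (rule perf_phi)
  have D: "(\<bar>of_int k\<bar> + 1) / (2::real)^l \<le> (\<bar>of_int k\<bar> + 1) / 1"
    by (rule divide_left_mono) (auto simp: two_pow_ge1)
  have a: "- real (nat \<bar>k\<bar> + 1) - 2 \<le> (of_int k - 1) / 2^l"
  proof -
    have "- (\<bar>of_int k\<bar> + 1) \<le> (- (\<bar>of_int k\<bar> + 1)) / (2::real)^l"
      using D by (simp only: minus_divide_left neg_le_iff_le div_by_1)
    also have "\<dots> \<le> (of_int k - 1) / 2^l" by (intro divide_right_mono) auto
    finally show ?thesis by simp
  qed
  have b: "(of_int k + 1) / 2^l \<le> real (nat \<bar>k\<bar> + 1) + 3"
  proof -
    have "(of_int k + 1) / (2::real)^l \<le> (\<bar>of_int k\<bar> + 1) / 2^l" by (intro divide_right_mono) auto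
    also have "\<dots> \<le> \<bar>of_int k\<bar> + 1"
      using D by simp
    finally show ?thesis by simp
  qed
  have "((\<lambda>x. of_real (2 powr (real l / 2)) * (of_real (hat (2^l*x - of_int k)) * exp (cc q * of_real x)))
        has_integral (of_real (2 powr (real l / 2)) * Vh (2^l) (of_int k) (cc q)))
        {- real (nat \<bar>k\<bar> + 1) - 2..real (nat \<bar>k\<bar> + 1) + 3}"
    by (rule has_integral_mult_right[OF hatF[OF _ a b]]) simp
  then have "integral {- real (nat \<bar>k\<bar> + 1) - 2..real (nat \<bar>k\<bar> + 1) + 3} (\<lambda>x. of_real (phi_lk l k x) * EE q x)
      = of_real (2 powr (real l / 2)) * Vh (2^l) (of_int k) (cc q)"
    by (intro integral_unique) (simp add: phi_lk_def EE_cc mult.assoc)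
  then show ?thesis by (simp add: ip_per per_to_R)
qed


lemma J5: "{-1..3::int} = {-1,0,1,2,3}" by auto

lemma psi_expand: "psi_lk l k x = 2 powr (real l / 2) *
   (\<Sum>j\<in>{-1..3::int}. bfilt j * hat (2^(l+1) * x - of_int (2*k+j)))"
  unfolding psi_lk_def psi_def by (simp add: algebra_simps)

lemma small_quot:
  assumes "\<bar>m\<bar> \<le> 2 * \<bar>k\<bar> + 3" "(2::real) \<le> s"
  shows "- (\<bar>of_int k\<bar> + 2) \<le> (of_int m - 1) / s" "(of_int m + 1) / s \<le> \<bar>of_int k\<bar> + 2"
proof -
  have m: "\<bar>real_of_int m\<bar> \<le> 2 * \<bar>of_int k\<bar> + 3" using assms(1) by linarith
  have "\<bar>of_int m - 1\<bar> / s \<le> (2 * \<bar>of_int k\<bar> + 4) / s" "\<bar>of_int m + 1\<bar> / s \<le> (2 * \<bar>of_int k\<bar> + 4) / s"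
    using m assms(2) by (auto intro!: divide_right_mono)
  moreover have "(2 * \<bar>of_int k\<bar> + 4) / s \<le> (2 * \<bar>of_int k\<bar> + 4) / 2"
    using assms(2) by (intro divide_left_mono) auto
  moreover have "(2 * \<bar>real_of_int k\<bar> + 4) / 2 = \<bar>of_int k\<bar> + 2" by simp
  moreover have "\<bar>(of_int m - 1) / s\<bar> = \<bar>of_int m - 1\<bar> / s" "\<bar>(of_int m + 1) / s\<bar> = \<bar>of_int m + 1\<bar> / s"
    using assms(2) by (auto simp: abs_divide)
  ultimately have "\<bar>(of_int m - 1) / s\<bar> \<le> \<bar>of_int k\<bar> + 2" "\<bar>(of_int m + 1) / s\<bar> \<le> \<bar>of_int k\<bar> + 2"
    by linarith+
  then show "- (\<bar>of_int k\<bar> + 2) \<le> (of_int m - 1) / s" "(of_int m + 1) / s \<le> \<bar>of_int k\<bar> + 2"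
    by (simp_all only: abs_le_iff) linarith+
qed

definition Tpsi :: "nat \<Rightarrow> int \<Rightarrow> real set" where
  "Tpsi l k = (\<Union>j\<in>{-1..3::int}. {(of_int (2*k+j) - 1) / 2^(l+1), of_int (2*k+j) / 2^(l+1), (of_int (2*k+j) + 1) / 2^(l+1)})"

lemma perf_psi: "perf (psi_lk l k) (nat \<bar>k\<bar> + 2) (Tpsi l k)"
proof
  show "continuous_on UNIV (psi_lk l k)"
    unfolding psi_expand[abs_def]
    by (intro continuous_intros continuous_on_compose2[OF cont_hat[of UNIV]]) auto
next
  fix y :: real assume y: "real (nat \<bar>k\<bar> + 2) < \<bar>y\<bar>"
  have "hat (2^(l+1) * y - of_int (2*k+j)) = 0" if j: "j \<in> {-1..3}" for j
  proof -
    have "2 * \<bar>y\<bar> \<le> 2^(l+1) * \<bar>y\<bar>"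
      by (rule mult_right_mono) auto
    moreover have "\<bar>real_of_int (2*k+j)\<bar> \<le> 2 * \<bar>of_int k\<bar> + 3" using j by auto
    ultimately have "1 \<le> \<bar>2^(l+1) * y - of_int (2*k+j)\<bar>" using y by (simp add: abs_mult)
    then show ?thesis by (rule hat_out)
  qed
  then show "psi_lk l k y = 0" unfolding psi_expand by simp
next
  show "finite (Tpsi l k)" unfolding Tpsi_def by simp
next
  fix y :: real assume y: "y \<notin> Tpsi l k"
  have "(\<lambda>x. hat (2^(l+1) * x - of_int (2*k+j))) differentiable (at y)" if j: "j \<in> {-1..3}" for j
  proof (rule hat_lin_diff)
    show "2^(l+1) * y - of_int (2*k+j) \<notin> {-1,0,1}"
    proof
      assume "2^(l+1) * y - of_int (2*k+j) \<in> {-1,0,1}"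
      then have "y = (of_int (2*k+j) - 1) / 2^(l+1) \<or> y = of_int (2*k+j) / 2^(l+1) \<or> y = (of_int (2*k+j) + 1) / 2^(l+1)"
        by (auto simp: field_simps)
      then show False using y j unfolding Tpsi_def by blast
    qed
  qed
  then show "psi_lk l k differentiable (at y)"
    unfolding psi_expand[abs_def]
    by (intro differentiable_mult differentiable_const differentiable_sum) auto
qed

lemma ip_psi: "ip (per (psi_lk l k)) (xi q) = of_real (2 powr (real l / 2)) *
   (\<Sum>j\<in>{-1..3::int}. of_real (bfilt j) * Vh (2^(l+1)) (of_int (2*k+j)) (cc q))"
proof -
  interpret perf "psi_lk l k" "nat \<bar>k\<bar> + 2" "Tpsi l k"
    by (rule perf_psi)
  have "((\<lambda>x. \<Sum>j\<in>{-1..3::int}. of_real (bfilt j) * (of_real (hat (2^(l+1)*x - of_int (2*k+j))) * exp (cc q * of_real x)))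
        has_integral (\<Sum>j\<in>{-1..3::int}. of_real (bfilt j) * Vh (2^(l+1)) (of_int (2*k+j)) (cc q)))
        {- real (nat \<bar>k\<bar> + 2) - 2..real (nat \<bar>k\<bar> + 2) + 3}"
  proof (intro has_integral_sum has_integral_mult_right hatF)
    fix j :: int assume j: "j \<in> {-1..3}"
    then have m: "\<bar>2*k+j\<bar> \<le> 2 * \<bar>k\<bar> + 3" by auto
    have s2: "(2::real) \<le> 2^(l+1)" using two_pow_ge1[of l] by simp
    show "- real (nat \<bar>k\<bar> + 2) - 2 \<le> (of_int (2*k+j) - 1) / 2^(l+1)"
      using small_quot(1)[OF m s2] by simp
    show "(of_int (2*k+j) + 1) / 2^(l+1) \<le> real (nat \<bar>k\<bar> + 2) + 3"
      using small_quot(2)[OF m s2] by simp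
  qed auto
  then have "((\<lambda>x. of_real (2 powr (real l / 2)) * (\<Sum>j\<in>{-1..3::int}. of_real (bfilt j) * (of_real (hat (2^(l+1)*x - of_int (2*k+j))) * exp (cc q * of_real x))))
        has_integral (of_real (2 powr (real l / 2)) * (\<Sum>j\<in>{-1..3::int}. of_real (bfilt j) * Vh (2^(l+1)) (of_int (2*k+j)) (cc q))))
        {- real (nat \<bar>k\<bar> + 2) - 2..real (nat \<bar>k\<bar> + 2) + 3}"
    by (rule has_integral_mult_right)
  then have "integral {- real (nat \<bar>k\<bar> + 2) - 2..real (nat \<bar>k\<bar> + 2) + 3} (\<lambda>x. of_real (psi_lk l k x) * EE q x)
      = of_real (2 powr (real l / 2)) * (\<Sum>j\<in>{-1..3::int}. of_real (bfilt j) * Vh (2^(l+1)) (of_int (2*k+j)) (cc q))"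
    by (intro integral_unique) (simp add: psi_expand EE_cc mult.assoc sum_distrib_right)
  then show ?thesis by (simp add: ip_per per_to_R)
qed


lemma pow2_powr: "(2::real) ^ n = 2 powr real n" by (simp add: powr_realpow)

lemma phi_q_bound:
  assumes q: "q \<noteq> 0" and g: "0 \<le> \<gamma>" "\<gamma> \<le> 2"
  shows "cmod (ip (per (phi_lk l k)) (xi q)) \<le> 2 powr ((3/2 - \<gamma>) * real l) * \<bar>pi * of_int q\<bar> powr (\<gamma> - 2)"
proof -
  have s: "(2::real)^l > 0" by simp
  have "cmod (ip (per (phi_lk l k)) (xi q)) = 2 powr (real l / 2) * ((2^l) * sin (pi * of_int q / 2^l) ^ 2 / (pi * of_int q) ^ 2)"
    by (simp add: ip_phi norm_mult Vmod[OF s q])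
  also have "\<dots> \<le> 2 powr (real l / 2) * ((2^l) powr (1 - \<gamma>) * \<bar>pi * of_int q\<bar> powr (\<gamma> - 2))"
    by (intro mult_left_mono M_bound[OF s q g]) simp
  also have "((2::real)^l) powr (1 - \<gamma>) = 2 powr (real l * (1 - \<gamma>))"
    by (simp add: pow2_powr powr_powr)
  also have "2 powr (real l / 2) * (2 powr (real l * (1 - \<gamma>)) * \<bar>pi * of_int q\<bar> powr (\<gamma> - 2))
      = 2 powr (real l / 2 + real l * (1 - \<gamma>)) * \<bar>pi * of_int q\<bar> powr (\<gamma> - 2)"
    by (simp add: powr_add)
  also have "real l / 2 + real l * (1 - \<gamma>) = (3/2 - \<gamma>) * real l" by (simp add: field_simps)
  finally show ?thesis .
qed

lemma bnorm0_val: "bnorm0 = 5"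
proof -
  have "{j\<in>{-1..3::int}. bfilt j \<noteq> 0} = {-1,0,1,2,3}" by (auto simp: bfilt_def)
  then show ?thesis unfolding bnorm0_def by simp
qed

lemma bnorm2_val: "bnorm2 = sqrt (23/8)"
  unfolding bnorm2_def J5 by (simp add: bfilt_def power2_eq_square)

lemma three_le: "3 \<le> bnorm2 * sqrt (real bnorm0)"
proof -
  have "bnorm2 * sqrt (real bnorm0) = sqrt (115/8)"
    by (simp add: bnorm2_val bnorm0_val real_sqrt_mult[symmetric])
  moreover have "sqrt 9 \<le> sqrt (115/8::real)" by (subst real_sqrt_le_iff) simp
  ultimately show ?thesis by simp
qed

lemma sum_abs_b: "(\<Sum>j\<in>{-1..3::int}. \<bar>bfilt j\<bar>) = 3"
  unfolding J5 by (simp add: bfilt_def)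

lemma sum_b: "(\<Sum>j\<in>{-1..3::int}. bfilt j) = 0"
  unfolding J5 by (simp add: bfilt_def)

lemma psi_q_bound:
  assumes q: "q \<noteq> 0" and g: "0 \<le> \<gamma>" "\<gamma> \<le> 2"
  shows "cmod (ip (per (psi_lk l k)) (xi q)) \<le> 2 powr (1 - \<gamma>) * bnorm2 * sqrt (real bnorm0)
     * 2 powr ((3/2 - \<gamma>) * real l) * \<bar>pi * of_int q\<bar> powr (\<gamma> - 2)"
proof -
  have s: "(2::real)^(l+1) > 0" by simp
  define M where "M = (2^(l+1)) * sin (pi * of_int q / 2^(l+1)) ^ 2 / (pi * of_int q) ^ 2"
  define B where "B = 2 powr (1 - \<gamma>) * 2 powr ((3/2 - \<gamma>) * real l) * \<bar>pi * of_int q\<bar> powr (\<gamma> - 2)"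
  have "cmod (ip (per (psi_lk l k)) (xi q)) = 2 powr (real l / 2) *
      cmod (\<Sum>j\<in>{-1..3::int}. of_real (bfilt j) * Vh (2^(l+1)) (of_int (2*k+j)) (cc q))"
    by (simp add: ip_psi norm_mult)
  also have "\<dots> \<le> 2 powr (real l / 2) * (\<Sum>j\<in>{-1..3::int}. \<bar>bfilt j\<bar> * M)"
  proof (intro mult_left_mono order.trans[OF norm_sum] sum_mono)
    fix j :: int
    show "cmod (of_real (bfilt j) * Vh (2^(l+1)) (of_int (2*k+j)) (cc q)) \<le> \<bar>bfilt j\<bar> * M"
    proof -
      have "cmod (of_real (bfilt j) * Vh (2^(l+1)) (of_int (2*k+j)) (cc q)) = \<bar>bfilt j\<bar> * cmod (Vh (2^(l+1)) (of_int (2*k+j)) (cc q))"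
        by (simp only: norm_mult norm_of_real)
      also have "\<dots> = \<bar>bfilt j\<bar> * M" by (simp only: Vmod[OF s q] M_def)
      finally show ?thesis by simp
    qed
  qed simp
  also have "\<dots> = 3 * (2 powr (real l / 2) * M)"
    by (simp add: sum_distrib_right[symmetric] sum_abs_b)
  also have "2 powr (real l / 2) * M \<le> 2 powr (real l / 2) * ((2^(l+1)) powr (1 - \<gamma>) * \<bar>pi * of_int q\<bar> powr (\<gamma> - 2))"
    unfolding M_def by (intro mult_left_mono M_bound[OF s q g]) simp
  also have "((2::real)^(l+1)) powr (1 - \<gamma>) = 2 powr ((real l + 1) * (1 - \<gamma>))"
    by (subst pow2_powr) (simp add: powr_powr add.commute)
  also have "2 powr (real l / 2) * (2 powr ((real l + 1) * (1 - \<gamma>)) * \<bar>pi * of_int q\<bar> powr (\<gamma> - 2))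
      = 2 powr (real l / 2 + (real l + 1) * (1 - \<gamma>)) * \<bar>pi * of_int q\<bar> powr (\<gamma> - 2)"
    by (simp add: powr_add)
  also have "real l / 2 + (real l + 1) * (1 - \<gamma>) = (1 - \<gamma>) + (3/2 - \<gamma>) * real l" by (simp add: field_simps)
  also have "2 powr ((1 - \<gamma>) + (3/2 - \<gamma>) * real l) * \<bar>pi * of_int q\<bar> powr (\<gamma> - 2) = B"
    by (simp add: B_def powr_add)
  finally have "cmod (ip (per (psi_lk l k)) (xi q)) \<le> 3 * B" by simp
  also have "\<dots> \<le> (bnorm2 * sqrt (real bnorm0)) * B"
    by (intro mult_right_mono three_le) (simp add: B_def)
  finally show ?thesis by (simp add: B_def algebra_simps)
qed

lemma final_alg:
  assumes q: "q \<noteq> 0"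
  shows "(2 * pi * \<bar>real_of_int q\<bar>) ^ (a1 + a2) * (C * \<bar>pi * of_int q\<bar> powr (\<gamma> - 2))
    = 2 ^ (a1 + a2) * C * \<bar>pi * of_int q\<bar> powr (\<gamma> - 2 + real a1 + real a2)"
proof -
  define P where "P = \<bar>pi * of_int q\<bar>"
  have P: "P > 0" using q by (simp add: P_def)
  have e0: "2 * pi * \<bar>real_of_int q\<bar> = 2 * P" by (simp add: P_def abs_mult)
  have e1: "(2 * pi * \<bar>real_of_int q\<bar>) ^ (a1 + a2) = 2 ^ (a1 + a2) * P ^ (a1 + a2)"
    by (simp only: e0 power_mult_distrib)
  have e2: "P powr (\<gamma> - 2 + real a1 + real a2) = P powr (\<gamma> - 2) * P ^ (a1 + a2)"
    using P by (simp add: powr_add powr_realpow[symmetric] add.assoc)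
  show ?thesis unfolding P_def[symmetric] e1 e2 by (simp add: mult_ac)
qed

lemma phi_q0: "cmod (ip (per (phi_lk l k)) (xi 0)) = 2 powr (- real l / 2)"
proof -
  have "cmod (ip (per (phi_lk l k)) (xi 0)) = 2 powr (real l / 2) / 2 powr real l"
    by (simp add: ip_phi Vh_def cc_def norm_mult norm_divide pow2_powr)
  also have "\<dots> = 2 powr (real l / 2 - real l)" by (simp only: powr_diff)
  also have "real l / 2 - real l = - real l / 2" by simp
  finally show ?thesis .
qed

lemma psi_q0: "cmod (ip (per (psi_lk l k)) (xi 0)) = 0"
proof -
  have "(\<Sum>j\<in>{-1..3::int}. of_real (bfilt j) * Vh (2^(l+1)) (of_int (2*k+j)) (cc 0))
      = of_real (\<Sum>j\<in>{-1..3::int}. bfilt j) * (of_real (1 / 2^(l+1)) :: complex)"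
    by (simp add: Vh_def cc_def sum_distrib_right sum_divide_distrib)
  then show ?thesis by (simp add: ip_psi sum_b)
qed

theorem lemma4p1:
  fixes l0 l :: nat and k :: int
  assumes "l0 \<ge> 2" and "l \<ge> l0" and "0 \<le> k" and "k < 2 ^ l"
  shows "(\<forall>q::int. \<forall>a1 a2::nat. \<forall>\<gamma>::real.
            q \<noteq> 0 \<and> a1 \<le> 1 \<and> a2 \<le> 1 \<and> 0 \<le> \<gamma> \<and> \<gamma> \<le> 2 \<longrightarrow>
              cmod (ip (Dop a1 (per (phi_lk l k))) (Dop a2 (xi q)))
                \<le> 2 ^ (a1 + a2) * 2 powr ((3/2 - \<gamma>) * real l)
                  * \<bar>pi * of_int q\<bar> powr (\<gamma> - 2 + real a1 + real a2)
            \<and> cmod (ip (Dop a1 (per (psi_lk l k))) (Dop a2 (xi q)))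
                \<le> 2 powr (real a1 + real a2 + 1 - \<gamma>) * bnorm2 * sqrt (real bnorm0)
                  * 2 powr ((3/2 - \<gamma>) * real l)
                  * \<bar>pi * of_int q\<bar> powr (\<gamma> - 2 + real a1 + real a2))
       \<and> cmod (ip (Dop 1 (per (phi_lk l k))) (Dop 1 (xi 0))) = 0
       \<and> cmod (ip (Dop 1 (per (psi_lk l k))) (Dop 1 (xi 0))) = 0
       \<and> cmod (ip (Dop 1 (per (phi_lk l k))) (xi 0)) = 0
       \<and> cmod (ip (Dop 1 (per (psi_lk l k))) (xi 0)) = 0
       \<and> cmod (ip (per (phi_lk l k)) (xi 0)) = 2 powr (- real l / 2)
       \<and> cmod (ip (per (psi_lk l k)) (xi 0)) = 0"
proof (intro conjI allI impI)
  fix q :: int and a1 a2 :: nat and \<gamma> :: real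
  assume h: "q \<noteq> 0 \<and> a1 \<le> 1 \<and> a2 \<le> 1 \<and> 0 \<le> \<gamma> \<and> \<gamma> \<le> 2"
  then have q: "q \<noteq> 0" and a: "a1 \<le> 1" "a2 \<le> 1" and g: "0 \<le> \<gamma>" "\<gamma> \<le> 2" by auto
  have cpos: "0 \<le> (2 * pi * \<bar>real_of_int q\<bar>) ^ (a1 + a2)" by simp
  have "cmod (ip (Dop a1 (per (phi_lk l k))) (Dop a2 (xi q)))
      \<le> (2 * pi * \<bar>real_of_int q\<bar>) ^ (a1 + a2) * cmod (ip (per (phi_lk l k)) (xi q))"
    by (rule perf.bound_D[OF perf_phi a])
  also have "\<dots> \<le> (2 * pi * \<bar>real_of_int q\<bar>) ^ (a1 + a2) * (2 powr ((3/2 - \<gamma>) * real l) * \<bar>pi * of_int q\<bar> powr (\<gamma> - 2))"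
    by (rule mult_left_mono[OF phi_q_bound[OF q g] cpos])
  also have "\<dots> = 2 ^ (a1 + a2) * 2 powr ((3/2 - \<gamma>) * real l) * \<bar>pi * of_int q\<bar> powr (\<gamma> - 2 + real a1 + real a2)"
    by (rule final_alg[OF q])
  finally show "cmod (ip (Dop a1 (per (phi_lk l k))) (Dop a2 (xi q)))
                \<le> 2 ^ (a1 + a2) * 2 powr ((3/2 - \<gamma>) * real l)
                  * \<bar>pi * of_int q\<bar> powr (\<gamma> - 2 + real a1 + real a2)" .
  have "cmod (ip (Dop a1 (per (psi_lk l k))) (Dop a2 (xi q)))
      \<le> (2 * pi * \<bar>real_of_int q\<bar>) ^ (a1 + a2) * cmod (ip (per (psi_lk l k)) (xi q))"
    by (rule perf.bound_D[OF perf_psi a])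
  also have "\<dots> \<le> (2 * pi * \<bar>real_of_int q\<bar>) ^ (a1 + a2) * ((2 powr (1 - \<gamma>) * bnorm2 * sqrt (real bnorm0)
     * 2 powr ((3/2 - \<gamma>) * real l)) * \<bar>pi * of_int q\<bar> powr (\<gamma> - 2))"
    by (rule mult_left_mono[OF psi_q_bound[OF q g] cpos])
  also have "\<dots> = 2 ^ (a1 + a2) * (2 powr (1 - \<gamma>) * bnorm2 * sqrt (real bnorm0)
     * 2 powr ((3/2 - \<gamma>) * real l)) * \<bar>pi * of_int q\<bar> powr (\<gamma> - 2 + real a1 + real a2)"
    by (rule final_alg[OF q])
  also have "(2::real) ^ (a1 + a2) * 2 powr (1 - \<gamma>) = 2 powr (real a1 + real a2 + 1 - \<gamma>)"
  proof -
    have "real a1 + real a2 + 1 - \<gamma> = real (a1 + a2) + (1 - \<gamma>)" by simp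
    then show ?thesis by (simp only: powr_add pow2_powr)
  qed
  then have "2 ^ (a1 + a2) * (2 powr (1 - \<gamma>) * bnorm2 * sqrt (real bnorm0)
     * 2 powr ((3/2 - \<gamma>) * real l)) * \<bar>pi * of_int q\<bar> powr (\<gamma> - 2 + real a1 + real a2)
     = 2 powr (real a1 + real a2 + 1 - \<gamma>) * bnorm2 * sqrt (real bnorm0)
                  * 2 powr ((3/2 - \<gamma>) * real l)
                  * \<bar>pi * of_int q\<bar> powr (\<gamma> - 2 + real a1 + real a2)"
    by (metis (no_types, lifting) mult.assoc)
  finally show "cmod (ip (Dop a1 (per (psi_lk l k))) (Dop a2 (xi q)))
                \<le> 2 powr (real a1 + real a2 + 1 - \<gamma>) * bnorm2 * sqrt (real bnorm0)
                  * 2 powr ((3/2 - \<gamma>) * real l)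
                  * \<bar>pi * of_int q\<bar> powr (\<gamma> - 2 + real a1 + real a2)" .
next
  show "cmod (ip (Dop 1 (per (phi_lk l k))) (Dop 1 (xi 0))) = 0"
    using perf.q0_facts(1)[OF perf_phi] by simp
next
  show "cmod (ip (Dop 1 (per (psi_lk l k))) (Dop 1 (xi 0))) = 0"
    using perf.q0_facts(1)[OF perf_psi] by simp
next
  show "cmod (ip (Dop 1 (per (phi_lk l k))) (xi 0)) = 0"
    using perf.q0_facts(2)[OF perf_phi] by simp
next
  show "cmod (ip (Dop 1 (per (psi_lk l k))) (xi 0)) = 0"
    using perf.q0_facts(2)[OF perf_psi] by simp
next
  show "cmod (ip (per (phi_lk l k)) (xi 0)) = 2 powr (- real l / 2)" by (rule phi_q0)
next
  show "cmod (ip (per (psi_lk l k)) (xi 0)) = 0" by (rule psi_q0)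
qed

end
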